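(* Let $v\ge 2$ be an integer and let $\theta\in[0,1]$. Play the tipsy cop and drunken robber game on the complete graph $K_v$, with the cop and robber starting at distinct vertices. Then the probability that the robber remains free after $m$ moves is \[ P_m(K_v)=\theta^{\lfloor m/2\rfloor}\left(\frac{v-2}{v-1}\right)^m \qquad (m\ge 0). \]
   Context: Tipsy cop and drunken robber game on a finite connected graph $G$: a cop and a robber are placed at distinct vertices. Moves are numbered $1,2,3,\dots$; the robber makes the odd-numbered moves and the cop the even-numbered moves, and on each move the mover must move to a vertex adjacent to its current vertex (staying put is not allowed). The robber always moves to a neighbor chosen uniformly at random. The cop, independently at each of her moves, with probability $\theta$ moves to a neighbor chosen uniformly at random, and with probability $1-\theta$ makes a directed move to a neighbor lying on a shortest path to the robber's current vertex (in particular onto the robber's vertex if it is adjacent). All random choices are independent. The robber is captured (and the game ends) as soon as both occupy the same vertex, whether the robber moves onto the cop or the cop moves onto the robber. $P_m(G)$ denotes the probability that the robber has not been captured during the first $m$ moves ($P_0(G)=1$). *)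

theory Defs
  imports Complex_Main
begin

text \<open>A finite simple graph is given by a vertex set V and a symmetric irreflexive
  adjacency relation E (restricted to V).\<close>

definition nbrs :: "'a set \<Rightarrow> ('a \<Rightarrow> 'a \<Rightarrow> bool) \<Rightarrow> 'a \<Rightarrow> 'a set" where
  "nbrs V E x = {y \<in> V. E x y}"

definition deg :: "'a set \<Rightarrow> ('a \<Rightarrow> 'a \<Rightarrow> bool) \<Rightarrow> 'a \<Rightarrow> nat" where
  "deg V E x = card (nbrs V E x)"

inductive walk_len :: "'a set \<Rightarrow> ('a \<Rightarrow> 'a \<Rightarrow> bool) \<Rightarrow> nat \<Rightarrow> 'a \<Rightarrow> 'a \<Rightarrow> bool"
  for V E where
  walk0: "x \<in> V \<Longrightarrow> walk_len V E 0 x x"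
| walkS: "x \<in> V \<Longrightarrow> y \<in> V \<Longrightarrow> E x y \<Longrightarrow> walk_len V E n y z \<Longrightarrow> walk_len V E (Suc n) x z"

definition gdist :: "'a set \<Rightarrow> ('a \<Rightarrow> 'a \<Rightarrow> bool) \<Rightarrow> 'a \<Rightarrow> 'a \<Rightarrow> nat" where
  "gdist V E x y = (LEAST n. walk_len V E n x y)"

text \<open>A directed-move rule for the cop: at move number i, with cop at c and robber at r,
  it prescribes a neighbour of c lying on a shortest path from c to r.\<close>
definition valid_cop_rule ::
  "'a set \<Rightarrow> ('a \<Rightarrow> 'a \<Rightarrow> bool) \<Rightarrow> (nat \<Rightarrow> 'a \<Rightarrow> 'a \<Rightarrow> 'a) \<Rightarrow> bool" where
  "valid_cop_rule V E \<sigma> \<longleftrightarrow>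
     (\<forall>i c r. c \<in> V \<longrightarrow> r \<in> V \<longrightarrow> c \<noteq> r \<longrightarrow>
        \<sigma> i c r \<in> nbrs V E c \<and> gdist V E (\<sigma> i c r) r + 1 = gdist V E c r)"

text \<open>survive V E \<theta> \<sigma> n i c r: probability that the robber is not captured during the
  next n moves, where i is the number of the next move (odd: robber moves, even: cop moves),
  the cop is at c and the robber at r (c \<noteq> r).\<close>
fun survive ::
  "'a set \<Rightarrow> ('a \<Rightarrow> 'a \<Rightarrow> bool) \<Rightarrow> real \<Rightarrow> (nat \<Rightarrow> 'a \<Rightarrow> 'a \<Rightarrow> 'a) \<Rightarrow> nat \<Rightarrow> nat \<Rightarrow> 'a \<Rightarrow> 'a \<Rightarrow> real"
where
  "survive V E \<theta> \<sigma> 0 i c r = 1"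
| "survive V E \<theta> \<sigma> (Suc n) i c r =
     (if odd i then
        (\<Sum>y\<in>nbrs V E r. if y = c then 0 else survive V E \<theta> \<sigma> n (Suc i) c y) / real (deg V E r)
      else
        \<theta> * ((\<Sum>y\<in>nbrs V E c. if y = r then 0 else survive V E \<theta> \<sigma> n (Suc i) y r) / real (deg V E c))
        + (1 - \<theta>) * (let y = \<sigma> i c r in if y = r then 0 else survive V E \<theta> \<sigma> n (Suc i) y r))"

text \<open>P_m(G) with cop starting at c0, robber at r0; moves are numbered from 1.\<close>
definition P_free ::
  "'a set \<Rightarrow> ('a \<Rightarrow> 'a \<Rightarrow> bool) \<Rightarrow> real \<Rightarrow> (nat \<Rightarrow> 'a \<Rightarrow> 'a \<Rightarrow> 'a) \<Rightarrow> 'a \<Rightarrow> 'a \<Rightarrow> nat \<Rightarrow> real" where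
  "P_free V E \<theta> \<sigma> c0 r0 m = survive V E \<theta> \<sigma> m 1 c0 r0"

definition K_verts :: "nat \<Rightarrow> nat set" where "K_verts v = {0..<v}"
definition K_adj :: "nat \<Rightarrow> nat \<Rightarrow> bool" where "K_adj x y \<longleftrightarrow> x \<noteq> y"

end

theory Submission
  imports Defs
begin

lemma sum_if_const:
  assumes "finite A" "c \<in> A"
  shows "(\<Sum>y\<in>A. if y = c then 0 else (K::real)) = real (card A - 1) * K"
proof -
  have "(\<Sum>y\<in>A. if y = c then 0 else K) = (\<Sum>y\<in>A - {c}. if y = c then 0 else K)"
    using assms by (simp add: sum.remove)
  also have "\<dots> = (\<Sum>y\<in>A - {c}. K)" by (rule sum.cong) auto
  also have "\<dots> = real (card A - 1) * K" using assms by simp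
  finally show ?thesis .
qed

lemma K_nbrs: "r \<in> K_verts v \<Longrightarrow> nbrs (K_verts v) K_adj r = K_verts v - {r}"
  by (auto simp: nbrs_def K_adj_def)

lemma K_deg: "r \<in> K_verts v \<Longrightarrow> deg (K_verts v) K_adj r = v - 1"
  unfolding deg_def by (simp add: K_nbrs) (simp add: K_verts_def)

lemma K_sigma:
  assumes "valid_cop_rule (K_verts v) K_adj \<sigma>" "c \<in> K_verts v" "r \<in> K_verts v" "c \<noteq> r"
  shows "\<sigma> i c r = r"
proof -
  let ?V = "K_verts v"
  have s: "\<sigma> i c r \<in> nbrs ?V K_adj c" and g: "gdist ?V K_adj (\<sigma> i c r) r + 1 = gdist ?V K_adj c r"
    using assms unfolding valid_cop_rule_def by blast+
  have sV: "\<sigma> i c r \<in> ?V" using s by (simp add: nbrs_def)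
  have w1: "walk_len ?V K_adj 1 c r"
    using assms by (auto intro!: walk_len.walkS[OF _ _ _ walk_len.walk0] simp: K_adj_def)
  have "gdist ?V K_adj c r \<le> 1" unfolding gdist_def using w1 by (rule Least_le)
  hence g0: "gdist ?V K_adj (\<sigma> i c r) r = 0" using g by simp
  show ?thesis
  proof (rule ccontr)
    assume ne: "\<sigma> i c r \<noteq> r"
    have "walk_len ?V K_adj 1 (\<sigma> i c r) r"
      using sV assms ne by (auto intro!: walk_len.walkS[OF _ _ _ walk_len.walk0] simp: K_adj_def)
    hence "walk_len ?V K_adj (gdist ?V K_adj (\<sigma> i c r) r) (\<sigma> i c r) r"
      unfolding gdist_def by (rule LeastI)
    hence "walk_len ?V K_adj 0 (\<sigma> i c r) r" using g0 by simp
    hence "\<sigma> i c r = r" by (cases rule: walk_len.cases) auto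
    with ne show False by simp
  qed
qed

lemma main_ind:
  assumes v2: "v \<ge> 2" and val: "valid_cop_rule (K_verts v) K_adj \<sigma>"
  shows "c \<in> K_verts v \<Longrightarrow> r \<in> K_verts v \<Longrightarrow> c \<noteq> r \<Longrightarrow>
    survive (K_verts v) K_adj \<theta> \<sigma> n i c r
    = \<theta> ^ (if odd i then n div 2 else Suc n div 2) * ((real v - 2) / (real v - 1)) ^ n"
proof (induction n arbitrary: i c r)
  case 0
  then show ?case by simp
next
  case (Suc n)
  let ?q = "(real v - 2) / (real v - 1)"
  have cardV: "r \<in> K_verts v \<Longrightarrow> card (K_verts v - {r}) = v - 1" for r by (simp add: K_verts_def)
  have rv: "real (v - 1) = real v - 1" "real (v - 1 - 1) = real v - 2" "real (v - Suc 0) = real v - 1" using v2 by auto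
  have nz: "real v - 1 \<noteq> 0" using v2 by simp
  show ?case
  proof (cases "odd i")
    case True
    let ?X = "\<theta> ^ (Suc n div 2) * ?q ^ n"
    have "(\<Sum>y\<in>nbrs (K_verts v) K_adj r. if y = c then 0 else survive (K_verts v) K_adj \<theta> \<sigma> n (Suc i) c y)
       = (\<Sum>y\<in>K_verts v - {r}. if y = c then 0 else ?X)"
      unfolding K_nbrs[OF Suc.prems(2)]
      by (rule sum.cong) (use Suc True in auto)
    also have "\<dots> = real (v - 1 - 1) * ?X"
      using Suc.prems by (subst sum_if_const) (auto simp: K_verts_def cardV)
    finally have S: "(\<Sum>y\<in>nbrs (K_verts v) K_adj r. if y = c then 0 else survive (K_verts v) K_adj \<theta> \<sigma> n (Suc i) c y) = (real v - 2) * ?X"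
      using rv by simp
    show ?thesis using True nz
      by (simp add: S K_deg[OF Suc.prems(2)] rv field_simps)
  next
    case False
    let ?X = "\<theta> ^ (n div 2) * ?q ^ n"
    have "(\<Sum>y\<in>nbrs (K_verts v) K_adj c. if y = r then 0 else survive (K_verts v) K_adj \<theta> \<sigma> n (Suc i) y r)
       = (\<Sum>y\<in>K_verts v - {c}. if y = r then 0 else ?X)"
      unfolding K_nbrs[OF Suc.prems(1)]
      by (rule sum.cong) (use Suc False in auto)
    also have "\<dots> = real (v - 1 - 1) * ?X"
      using Suc.prems by (subst sum_if_const) (auto simp: K_verts_def cardV)
    finally have S: "(\<Sum>y\<in>nbrs (K_verts v) K_adj c. if y = r then 0 else survive (K_verts v) K_adj \<theta> \<sigma> n (Suc i) y r) = (real v - 2) * ?X"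
      using rv by simp
    have sg: "\<sigma> i c r = r" using K_sigma[OF val Suc.prems] .
    have e: "Suc (Suc n) div 2 = Suc (n div 2)" by simp
    show ?thesis using False nz
      by (simp add: S sg e K_deg[OF Suc.prems(1)] rv field_simps)
  qed
qed

theorem mainTheorem1:
  fixes v :: nat and \<theta> :: real and \<sigma> :: "nat \<Rightarrow> nat \<Rightarrow> nat \<Rightarrow> nat" and c0 r0 m :: nat
  assumes "v \<ge> 2" and "0 \<le> \<theta>" and "\<theta> \<le> 1"
    and "c0 \<in> K_verts v" and "r0 \<in> K_verts v" and "c0 \<noteq> r0"
    and "valid_cop_rule (K_verts v) K_adj \<sigma>"
  shows "P_free (K_verts v) K_adj \<theta> \<sigma> c0 r0 m
         = \<theta> ^ (m div 2) * ((real v - 2) / (real v - 1)) ^ m"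
  unfolding P_free_def using main_ind[OF assms(1,7) assms(4,5,6), of \<theta> m 1] by simp

end
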